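(* Let $\rho:E\to B$ be a universal stream covering, where $B$ is a path-ordered stream. The following are equivalent: (1) the preorder $\leqslant_E$ is antisymmetric; (2) every stream map $\vec{\mathbb{S}}\to B$ whose underlying continuous map $\mathbb{S}\to UB$ is null-homotopic is constant.
   Context: A circulation on a space $X$ assigns to each open $V\subset X$ a preorder $\leqslant_V$ on $V$ such that for every collection $\mathcal{O}$ of open sets, $\leqslant_{\bigcup\mathcal{O}}$ is the preorder with smallest graph containing $\bigcup_{V\in\mathcal{O}}\mathrm{graph}(\leqslant_V)$. A stream is a space with a circulation ($\leqslant_X$ is the preorder on $X$ itself); a stream map $f:X\to Y$ is continuous with $f(x)\leqslant_V f(y)$ whenever $x\leqslant_{f^{-1}V}y$ for all open $V\subset Y$. $U$ denotes the forgetful functor to spaces. $\vec\square[1]$ is $[0,1]$ with circulation $x\leqslant_V y$ iff $x\le y$ and $[x,y]\subset V$; a dipath on a stream $X$ is a stream map $\vec\square[1]\to X$. $X$ is path-ordered if whenever $V\subset X$ is open and $x\leqslant_V y$, there is a dipath from $x$ to $y$ with image in $V$. $\vec{\mathbb{S}}$ is the unit circle $\mathbb{S}\subset\mathbb{C}$ with circulation: $z\leqslant_V z'$ iff there exist reals $\theta\le\theta'$ with $z=e^{i\theta}$, $z'=e^{i\theta'}$ and $e^{i[\theta,\theta']}\subset V$. An open substream of $X$ is an open set $V$ with circulation $W\mapsto\leqslant_W$ ($W\subset V$ open). A stream covering is a surjective stream map $\rho:E\to B$ such that $B$ is covered by open substreams whose preimages are disjoint unions of open substreams each mapped by $\rho$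 isomorphically (as streams) onto the corresponding open substream; it is universal if $U\rho$ is a universal covering of spaces. *)

theory Defs
  imports "HOL-Analysis.Analysis"
begin

text \<open>A stream is represented by a topology X together with a circulation
  C, where C V is the graph of the preorder on the open set V.\<close>

definition smallest_preorder_on :: "'a set \<Rightarrow> ('a \<times> 'a) set \<Rightarrow> ('a \<times> 'a) set" where
  "smallest_preorder_on A R = Id_on A \<union> R\<^sup>+"

definition is_circulation :: "'a topology \<Rightarrow> ('a set \<Rightarrow> ('a \<times> 'a) set) \<Rightarrow> bool" where
  "is_circulation X C \<longleftrightarrow>
     (\<forall>V. openin X V \<longrightarrow> C V \<subseteq> V \<times> V \<and> refl_on V (C V) \<and> trans (C V)) \<and>
     (\<forall>\<O>. (\<forall>V\<in>\<O>. openin X V) \<longrightarrow>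
        C (\<Union>\<O>) = smallest_preorder_on (\<Union>\<O>) (\<Union>V\<in>\<O>. C V))"

abbreviation is_stream :: "'a topology \<Rightarrow> ('a set \<Rightarrow> ('a \<times> 'a) set) \<Rightarrow> bool" where
  "is_stream X C \<equiv> is_circulation X C"

definition stream_map ::
  "'a topology \<Rightarrow> ('a set \<Rightarrow> ('a \<times> 'a) set) \<Rightarrow> 'b topology \<Rightarrow> ('b set \<Rightarrow> ('b \<times> 'b) set)
   \<Rightarrow> ('a \<Rightarrow> 'b) \<Rightarrow> bool" where
  "stream_map X C Y D f \<longleftrightarrow> continuous_map X Y f \<and>
     (\<forall>V x y. openin Y V \<longrightarrow> (x, y) \<in> C (topspace X \<inter> f -` V) \<longrightarrow> (f x, f y) \<in> D V)"

definition stream_iso ::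
  "'a topology \<Rightarrow> ('a set \<Rightarrow> ('a \<times> 'a) set) \<Rightarrow> 'b topology \<Rightarrow> ('b set \<Rightarrow> ('b \<times> 'b) set)
   \<Rightarrow> ('a \<Rightarrow> 'b) \<Rightarrow> bool" where
  "stream_iso X C Y D f \<longleftrightarrow> (\<exists>g. stream_map X C Y D f \<and> stream_map Y D X C g \<and>
     (\<forall>x\<in>topspace X. g (f x) = x) \<and> (\<forall>y\<in>topspace Y. f (g y) = y))"

definition dint_top :: "real topology" where
  "dint_top = top_of_set {0..1}"

definition dint_circ :: "real set \<Rightarrow> (real \<times> real) set" where
  "dint_circ V = {(x, y). x \<le> y \<and> {x..y} \<subseteq> V}"

definition dipath ::
  "'a topology \<Rightarrow> ('a set \<Rightarrow> ('a \<times> 'a) set) \<Rightarrow> (real \<Rightarrow> 'a) \<Rightarrow> bool" where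
  "dipath X C \<gamma> \<longleftrightarrow> stream_map dint_top dint_circ X C \<gamma>"

definition path_ordered :: "'a topology \<Rightarrow> ('a set \<Rightarrow> ('a \<times> 'a) set) \<Rightarrow> bool" where
  "path_ordered X C \<longleftrightarrow> (\<forall>V x y. openin X V \<longrightarrow> (x, y) \<in> C V \<longrightarrow>
     (\<exists>\<gamma>. dipath X C \<gamma> \<and> \<gamma> 0 = x \<and> \<gamma> 1 = y \<and> \<gamma> ` {0..1} \<subseteq> V))"

definition circle_top :: "complex topology" where
  "circle_top = top_of_set (sphere 0 1)"

definition circle_circ :: "complex set \<Rightarrow> (complex \<times> complex) set" where
  "circle_circ V = {(z, z'). \<exists>\<theta> \<theta>'. \<theta> \<le> \<theta>' \<and> z = exp (\<i> * of_real \<theta>) \<and>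
      z' = exp (\<i> * of_real \<theta>') \<and> (\<lambda>t. exp (\<i> * of_real t)) ` {\<theta>..\<theta>'} \<subseteq> V}"

text \<open>Stream coverings; the open substream on U has topology
  subtopology X U and circulation W \<mapsto> C W (for open W \<subseteq> U).\<close>
definition stream_covering ::
  "'e topology \<Rightarrow> ('e set \<Rightarrow> ('e \<times> 'e) set) \<Rightarrow> 'b topology \<Rightarrow> ('b set \<Rightarrow> ('b \<times> 'b) set)
   \<Rightarrow> ('e \<Rightarrow> 'b) \<Rightarrow> bool" where
  "stream_covering E CE B CB \<rho> \<longleftrightarrow> stream_map E CE B CB \<rho> \<and> \<rho> ` topspace E = topspace B \<and>
     (\<forall>b\<in>topspace B. \<exists>V. b \<in> V \<and> openin B V \<and>
        (\<exists>\<U>. \<Union>\<U> = topspace E \<inter> \<rho> -` V \<and> pairwise disjnt \<U> \<and>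
           (\<forall>U\<in>\<U>. openin E U \<and> stream_iso (subtopology E U) CE (subtopology B V) CB \<rho>)))"

definition covering_map :: "'e topology \<Rightarrow> 'b topology \<Rightarrow> ('e \<Rightarrow> 'b) \<Rightarrow> bool" where
  "covering_map E B p \<longleftrightarrow> continuous_map E B p \<and> p ` topspace E = topspace B \<and>
     (\<forall>b\<in>topspace B. \<exists>V. b \<in> V \<and> openin B V \<and>
        (\<exists>\<U>. \<Union>\<U> = topspace E \<inter> p -` V \<and> pairwise disjnt \<U> \<and>
           (\<forall>U\<in>\<U>. openin E U \<and> homeomorphic_map (subtopology E U) (subtopology B V) p)))"

definition simply_connected_space :: "'a topology \<Rightarrow> bool" where
  "simply_connected_space X \<longleftrightarrow> path_connected_space X \<and>
     (\<forall>p. pathin X p \<and> p 1 = p 0 \<longrightarrow>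
        homotopic_with (\<lambda>r. r 1 = r 0) (top_of_set {0..1}) X p (\<lambda>t. p 0))"

definition universal_covering_map :: "'e topology \<Rightarrow> 'b topology \<Rightarrow> ('e \<Rightarrow> 'b) \<Rightarrow> bool" where
  "universal_covering_map E B p \<longleftrightarrow> covering_map E B p \<and> simply_connected_space E"

definition universal_stream_covering ::
  "'e topology \<Rightarrow> ('e set \<Rightarrow> ('e \<times> 'e) set) \<Rightarrow> 'b topology \<Rightarrow> ('b set \<Rightarrow> ('b \<times> 'b) set)
   \<Rightarrow> ('e \<Rightarrow> 'b) \<Rightarrow> bool" where
  "universal_stream_covering E CE B CB \<rho> \<longleftrightarrow>
     stream_covering E CE B CB \<rho> \<and> universal_covering_map E B \<rho>"

definition null_homotopic :: "'a topology \<Rightarrow> 'b topology \<Rightarrow> ('a \<Rightarrow> 'b) \<Rightarrow> bool" where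
  "null_homotopic X Y f \<longleftrightarrow> (\<exists>c. homotopic_with (\<lambda>_. True) X Y f (\<lambda>_. c))"

end

theory Submission
  imports Defs
begin

definition evenly :: "'e topology \<Rightarrow> 'b topology \<Rightarrow> ('e \<Rightarrow> 'b) \<Rightarrow> 'b set \<Rightarrow> 'e set set \<Rightarrow> bool" where
  "evenly E B p V \<U> \<longleftrightarrow> openin B V \<and> \<Union>\<U> = topspace E \<inter> p -` V \<and> pairwise disjnt \<U> \<and>
      (\<forall>U\<in>\<U>. openin E U \<and> homeomorphic_map (subtopology E U) (subtopology B V) p)"

lemma covering_evenly:
  assumes "covering_map E B p" "b \<in> topspace B"
  obtains V \<U> where "b \<in> V" "evenly E B p V \<U>"
  using assms unfolding covering_map_def evenly_def by metis

lemma evenly_inv: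
  assumes "evenly E B p V \<U>" "U \<in> \<U>"
  obtains g where "continuous_map (subtopology B V) (subtopology E U) g"
    "\<And>x. x \<in> U \<Longrightarrow> g (p x) = x" "\<And>y. y \<in> V \<Longrightarrow> p (g y) = y"
    "\<And>y. y \<in> V \<Longrightarrow> g y \<in> U"
proof -
  have o: "openin B V" "openin E U" and h: "homeomorphic_map (subtopology E U) (subtopology B V) p"
    using assms unfolding evenly_def by auto
  have tU: "topspace (subtopology E U) = U" using o openin_subset by (metis topspace_subtopology_subset)
  have tV: "topspace (subtopology B V) = V" using o openin_subset by (metis topspace_subtopology_subset)
  from h obtain g where "homeomorphic_maps (subtopology E U) (subtopology B V) p g"
    using homeomorphic_map_maps by blast
  then show ?thesis using that tU tV unfolding homeomorphic_maps_def
    by (metis continuous_map_image_subset_topspace image_subset_iff)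
qed

lemma evenly_inj:
  assumes "evenly E B p V \<U>" "U \<in> \<U>" "x \<in> U" "y \<in> U" "p x = p y"
  shows "x = y"
  using evenly_inv[OF assms(1,2)] assms(3-5) by metis

lemma evenly_open: "evenly E B p V \<U> \<Longrightarrow> openin B V"
  unfolding evenly_def by simp

lemma evenly_openU: "evenly E B p V \<U> \<Longrightarrow> U \<in> \<U> \<Longrightarrow> openin E U"
  unfolding evenly_def by simp

lemma evenly_Union: "evenly E B p V \<U> \<Longrightarrow> \<Union>\<U> = topspace E \<inter> p -` V"
  unfolding evenly_def by simp

lemma evenly_disj: "evenly E B p V \<U> \<Longrightarrow> U1 \<in> \<U> \<Longrightarrow> U2 \<in> \<U> \<Longrightarrow> x \<in> U1 \<Longrightarrow> x \<in> U2 \<Longrightarrow> U1 = U2"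
  unfolding evenly_def pairwise_def disjnt_def by blast

lemma evenly_sub: "evenly E B p V \<U> \<Longrightarrow> U \<in> \<U> \<Longrightarrow> U \<subseteq> topspace E \<inter> p -` V"
  unfolding evenly_def by blast

lemma conn_in_sheet:
  assumes ev: "evenly E B p V \<U>" and U0: "U0 \<in> \<U>"
    and X: "connected_space X" and h: "continuous_map X E h"
    and hV: "\<And>x. x \<in> topspace X \<Longrightarrow> p (h x) \<in> V"
    and x0: "x0 \<in> topspace X" "h x0 \<in> U0"
  shows "\<And>x. x \<in> topspace X \<Longrightarrow> h x \<in> U0"
proof -
  let ?T = "{x \<in> topspace X. h x \<in> U0}"
  have oU: "\<And>U. U \<in> \<U> \<Longrightarrow> openin E U" using ev unfolding evenly_def by blast
  have o1: "openin X ?T" using openin_continuous_map_preimage[OF h oU[OF U0]] .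
  have "openin X {x \<in> topspace X. h x \<in> \<Union>(\<U> - {U0})}"
    by (rule openin_continuous_map_preimage[OF h]) (use oU in blast)
  moreover have "topspace X - ?T = {x \<in> topspace X. h x \<in> \<Union>(\<U> - {U0})}"
  proof -
    have "h x \<in> \<Union>\<U>" if "x \<in> topspace X" for x
      using ev that hV h unfolding evenly_def by (auto dest: continuous_map_image_subset_topspace)
    moreover have "h x \<notin> U0" if "x \<in> topspace X" "h x \<in> U" "U \<in> \<U>" "U \<noteq> U0" for x U
      using ev that U0 unfolding evenly_def pairwise_def disjnt_def by blast
    ultimately show ?thesis by blast
  qed
  ultimately have "closedin X ?T" unfolding closedin_def by auto
  with o1 X have "?T = {} \<or> ?T = topspace X" unfolding connected_space_clopen_in by blast
  with x0 show "\<And>x. x \<in> topspace X \<Longrightarrow> h x \<in> U0" by blast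
qed

lemma unique_lift:
  assumes cov: "covering_map E B p" and X: "connected_space X"
    and h1: "continuous_map X E h1" and h2: "continuous_map X E h2"
    and eq: "\<And>x. x \<in> topspace X \<Longrightarrow> p (h1 x) = p (h2 x)"
    and x0: "x0 \<in> topspace X" "h1 x0 = h2 x0"
  shows "\<And>x. x \<in> topspace X \<Longrightarrow> h1 x = h2 x"
proof -
  let ?T = "{x \<in> topspace X. h1 x = h2 x}"
  have key: "\<exists>N. openin X N \<and> x \<in> N \<and> (N \<subseteq> ?T \<or> N \<subseteq> topspace X - ?T)" if x: "x \<in> topspace X" for x
  proof -
    have "h1 x \<in> topspace E" "h2 x \<in> topspace E" using h1 h2 x
      by (auto dest: continuous_map_image_subset_topspace)
    then have b: "p (h1 x) \<in> topspace B" using cov unfolding covering_map_def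
      by (auto dest: continuous_map_image_subset_topspace)
    obtain V \<U> where bV: "p (h1 x) \<in> V" and ev: "evenly E B p V \<U>"
      using covering_evenly[OF cov b] by blast
    have "h1 x \<in> \<Union>\<U>" "h2 x \<in> \<Union>\<U>" using ev bV eq[OF x] \<open>h1 x \<in> topspace E\<close> \<open>h2 x \<in> topspace E\<close>
      unfolding evenly_def by auto
    then obtain U1 U2 where U: "U1 \<in> \<U>" "U2 \<in> \<U>" "h1 x \<in> U1" "h2 x \<in> U2" by blast
    let ?N = "{y \<in> topspace X. h1 y \<in> U1} \<inter> {y \<in> topspace X. h2 y \<in> U2}"
    have oN: "openin X ?N"
      using ev U unfolding evenly_def
      by (intro openin_Int openin_continuous_map_preimage[OF h1] openin_continuous_map_preimage[OF h2]) auto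
    show ?thesis
    proof (cases "U1 = U2")
      case True
      have "?N \<subseteq> ?T" using evenly_inj[OF ev] U True eq by auto
      then show ?thesis using oN U x by blast
    next
      case False
      then have "disjnt U1 U2" using ev U unfolding evenly_def pairwise_def by blast
      then have "?N \<subseteq> topspace X - ?T" unfolding disjnt_def by auto
      then show ?thesis using oN U x by blast
    qed
  qed
  have "openin X ?T"
    by (subst openin_subopen) (use key in blast)
  moreover have "openin X (topspace X - ?T)"
    by (subst openin_subopen) (use key in blast)
  ultimately have "closedin X ?T" "openin X ?T" unfolding closedin_def by auto
  with X have "?T = {} \<or> ?T = topspace X" unfolding connected_space_clopen_in by blast
  with x0 show "\<And>x. x \<in> topspace X \<Longrightarrow> h1 x = h2 x" by blast
qed

lemma leb:
  fixes S :: "'a::metric_space set"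
  assumes S: "compact S" "S \<noteq> {}" and c: "continuous_map (top_of_set S) X c"
   and W: "\<And>W. W \<in> \<W> \<Longrightarrow> openin X W" and cov: "\<And>x. x \<in> S \<Longrightarrow> \<exists>W\<in>\<W>. c x \<in> W"
  obtains \<delta> where "\<delta>>0" "\<And>T. T \<subseteq> S \<Longrightarrow> diameter T < \<delta> \<Longrightarrow> \<exists>W\<in>\<W>. \<forall>x\<in>T. c x \<in> W"
proof -
  let ?C = "{Ob. open Ob \<and> (\<exists>W\<in>\<W>. \<forall>x\<in>S \<inter> Ob. c x \<in> W)}"
  have sub: "S \<subseteq> \<Union>?C"
  proof
    fix x assume x: "x \<in> S"
    then obtain W where W1: "W \<in> \<W>" "c x \<in> W" using cov by blast
    have "openin (top_of_set S) {y \<in> topspace (top_of_set S). c y \<in> W}"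
      using openin_continuous_map_preimage[OF c W[OF W1(1)]] .
    then obtain Ob where "open Ob" "{y \<in> topspace (top_of_set S). c y \<in> W} = S \<inter> Ob"
      unfolding openin_open by blast
    then show "x \<in> \<Union>?C" using x W1 by (auto intro!: exI[of _ Ob])
  qed
  then have ne: "?C \<noteq> {}" using S by blast
  have ope: "\<And>B. B \<in> ?C \<Longrightarrow> open B" by blast
  obtain \<delta> where "0 < \<delta>" and d: "\<And>T. \<lbrakk>T \<subseteq> S; diameter T < \<delta>\<rbrakk> \<Longrightarrow> \<exists>B \<in> ?C. T \<subseteq> B"
    apply (rule Lebesgue_number_lemma[OF S(1) ne sub])
     apply (erule ope)
    apply (erule that)
    apply assumption+
    done
  show ?thesis
  proof (rule that[OF \<open>0<\<delta>\<close>])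
    fix T assume "T \<subseteq> S" "diameter T < \<delta>"
    then obtain Ob where "Ob \<in> ?C" "T \<subseteq> Ob" using d by meson
    then obtain W where "W \<in> \<W>" "\<forall>x\<in>S \<inter> Ob. c x \<in> W" by auto
    then show "\<exists>W\<in>\<W>. \<forall>x\<in>T. c x \<in> W" using \<open>T \<subseteq> S\<close> \<open>T \<subseteq> Ob\<close> by blast
  qed
qed

lemma topspace_unit: "topspace (top_of_set {0..1::real}) = {0..1}" by simp

lemma path_lift:
  assumes cov: "covering_map E B p" and c: "pathin B c"
    and e: "e \<in> topspace E" "p e = c 0"
  shows "\<exists>q. pathin E q \<and> q 0 = e \<and> (\<forall>t\<in>{0..1}. p (q t) = c t)"
proof -
  let ?W = "{V. \<exists>\<U>. evenly E B p V \<U>}"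
  have cts: "continuous_map (top_of_set {0..1}) B c" using c unfolding pathin_def .
  have cin: "c t \<in> topspace B" if "t \<in> {0..1}" for t
    using continuous_map_image_subset_topspace[OF cts] that by auto
  obtain \<delta> where d0: "\<delta> > 0" and d: "\<And>T. T \<subseteq> {0..1} \<Longrightarrow> diameter T < \<delta> \<Longrightarrow> \<exists>W\<in>?W. \<forall>x\<in>T. c x \<in> W"
  proof (rule leb[of "{0..1::real}" B c ?W])
    show "\<And>W. W \<in> ?W \<Longrightarrow> openin B W" by (auto intro: evenly_open)
    show "\<exists>W\<in>?W. c x \<in> W" if "x \<in> {0..1}" for x
      using covering_evenly[OF cov cin[OF that]] by (metis (mono_tags, lifting) mem_Collect_eq)
  qed (use cts in auto)
  obtain N :: nat where N: "N > 0" "1 / real N < \<delta>"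
    by (metis d0 nat_approx_posE zero_less_Suc of_nat_Suc)
  have "\<exists>q. continuous_map (top_of_set {0..real k / N}) E q \<and> q 0 = e \<and> (\<forall>t\<in>{0..real k / N}. p (q t) = c t)"
    if "k \<le> N" for k
    using that
  proof (induction k)
    case 0
    show ?case using e by (intro exI[of _ "\<lambda>_. e"]) auto
  next
    case (Suc k)
    then obtain q where q: "continuous_map (top_of_set {0..real k / N}) E q" "q 0 = e"
      "\<forall>t\<in>{0..real k / N}. p (q t) = c t" by auto
    let ?a = "real k / N" and ?b = "real (Suc k) / N"
    have ab: "0 \<le> ?a" "?a \<le> ?b" "?b \<le> 1" using Suc.prems N by (auto simp: divide_simps)
    have "diameter {?a..?b} < \<delta>" using ab N by (simp add: diff_divide_distrib[symmetric])
    then obtain V where "V \<in> ?W" and cV: "\<forall>x\<in>{?a..?b}. c x \<in> V" using d[of "{?a..?b}"] ab by auto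
    then obtain \<U> where ev: "evenly E B p V \<U>" by blast
    have qa: "q ?a \<in> topspace E" using continuous_map_image_subset_topspace[OF q(1)] ab by auto
    have "q ?a \<in> \<Union>\<U>" using ev qa q(3) cV ab unfolding evenly_def by auto
    then obtain U where U: "U \<in> \<U>" "q ?a \<in> U" by blast
    obtain g where g: "continuous_map (subtopology B V) (subtopology E U) g"
      "\<And>x. x \<in> U \<Longrightarrow> g (p x) = x" "\<And>y. y \<in> V \<Longrightarrow> p (g y) = y"
      using evenly_inv[OF ev U(1)] by metis
    define q' where "q' t = (if t \<le> ?a then q t else g (c t))" for t
    have "continuous_map (top_of_set {0..?b}) E q'"
      unfolding q'_def
    proof (rule continuous_map_cases_le)
      show "continuous_map (top_of_set {0..?b}) euclideanreal (\<lambda>x. x)" by simp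
      show "continuous_map (top_of_set {0..?b}) euclideanreal (\<lambda>x. ?a)" by simp
      have "{0..?b} \<inter> {x \<in> topspace (top_of_set {0..?b}). x \<le> ?a} = {0..?a}" using ab by auto
      then show "continuous_map (subtopology (top_of_set {0..?b}) {x \<in> topspace (top_of_set {0..?b}). x \<le> ?a}) E q"
        using q(1) by (simp only: subtopology_subtopology)
      have s: "{0..?b} \<inter> {x \<in> topspace (top_of_set {0..?b}). ?a \<le> x} = {?a..?b}" using ab by auto (meson order_trans ab(1))+
      have c1: "continuous_map (top_of_set {?a..?b}) (subtopology B V) c"
        using cV ab by (intro continuous_map_into_subtopology continuous_map_from_subtopology_mono[OF cts]) auto
      have "continuous_map (top_of_set {?a..?b}) E (g \<circ> c)"
        using continuous_map_compose[OF c1 g(1)] continuous_map_from_subtopology_mono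
        by (metis continuous_map_in_subtopology)
      then show "continuous_map (subtopology (top_of_set {0..?b}) {x \<in> topspace (top_of_set {0..?b}). ?a \<le> x}) E (\<lambda>x. g (c x))"
        using s by (simp only: subtopology_subtopology o_def)
      show "\<And>x. x \<in> topspace (top_of_set {0..?b}) \<Longrightarrow> x = ?a \<Longrightarrow> q x = g (c x)"
        using U q(3) g(2) ab by (metis atLeastAtMost_iff order_refl)
    qed
    moreover have "q' 0 = e" using q ab unfolding q'_def by simp
    moreover have "\<forall>t\<in>{0..?b}. p (q' t) = c t"
      using q(3) g(3) cV unfolding q'_def by auto
    ultimately show ?case by blast
  qed
  then obtain q where q: "continuous_map (top_of_set {0..real N / N}) E q" "q 0 = e"
      "\<forall>t\<in>{0..real N / N}. p (q t) = c t" by blast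
  have N1: "real N / real N = 1" using N by simp
  show ?thesis unfolding pathin_def using q unfolding N1 by blast
qed

lemma continuous_map_local:
  assumes "\<And>x. x \<in> topspace X \<Longrightarrow> \<exists>T. openin X T \<and> x \<in> T \<and> continuous_map (subtopology X T) Y f"
  shows "continuous_map X Y f"
proof -
  obtain T where T: "\<And>x. x\<in>topspace X \<Longrightarrow> openin X (T x) \<and> x \<in> T x \<and> continuous_map (subtopology X (T x)) Y f"
    using assms by metis
  show ?thesis
    by (rule pasting_lemma[where I="topspace X" and T=T and f="\<lambda>_. f"]) (use T in auto)
qed

lemma unit_prod: "prod_topology (top_of_set S) (top_of_set T) = top_of_set (S \<times> T)"
  by (simp add: subtopology_Times[symmetric])

lemma slice_t:
  assumes K: "continuous_map (prod_topology (top_of_set {0..1}) (top_of_set {0..1})) B K"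
    and s: "s \<in> {0..1::real}"
  shows "pathin B (\<lambda>t. K (s, t))"
  unfolding pathin_def
  by (rule continuous_map_compose[OF _ K, unfolded o_def])
     (intro continuous_map_pairedI, use s in auto)

lemma slice_s:
  assumes K: "continuous_map (prod_topology (top_of_set {0..1}) (top_of_set {0..1})) B K"
    and t: "t \<in> {0..1::real}" and J: "J \<subseteq> {0..1}"
  shows "continuous_map (top_of_set J) B (\<lambda>s. K (s, t))"
  by (rule continuous_map_compose[OF _ K, unfolded o_def])
     (intro continuous_map_pairedI, use t J in auto)

lemma pathin_restrict:
  assumes "pathin E q" "I \<subseteq> {0..1}"
  shows "continuous_map (top_of_set I) E q"
  using assms unfolding pathin_def
  by (metis continuous_map_from_subtopology_mono)

lemma pathin_in: "pathin E q \<Longrightarrow> t \<in> {0..1} \<Longrightarrow> q t \<in> topspace E"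
  unfolding pathin_def using continuous_map_image_subset_topspace by fastforce

lemma homotopy_lift_closed:
  assumes cov: "covering_map E B p"
    and K: "continuous_map (prod_topology (top_of_set {0..1}) (top_of_set {0..1})) B K"
    and a: "pathin E a" "\<And>s. s \<in> {0..1} \<Longrightarrow> p (a s) = K (s, 0)"
    and loop: "\<And>s. s \<in> {0..1} \<Longrightarrow> K (s, 1) = K (s, 0)"
    and cst: "\<And>t. t \<in> {0..1} \<Longrightarrow> K (1, t) = K (1, 0)"
    and q: "pathin E q" "q 0 = a 0" "\<And>t. t \<in> {0..1} \<Longrightarrow> p (q t) = K (0, t)"
  shows "q 1 = q 0"
proof -
  define lift where "lift s = (SOME r. pathin E r \<and> r 0 = a s \<and> (\<forall>t\<in>{0..1}. p (r t) = K (s, t)))" for s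
  have lift: "pathin E (lift s) \<and> lift s 0 = a s \<and> (\<forall>t\<in>{0..1}. p (lift s t) = K (s, t))"
    if s: "s \<in> {0..1}" for s
  proof -
    have "\<exists>r. pathin E r \<and> r 0 = a s \<and> (\<forall>t\<in>{0..1}. p (r t) = K (s, t))"
      by (rule path_lift[OF cov slice_t[OF K s]]) (use pathin_in[OF a(1) s] a(2)[OF s] in auto)
    then show ?thesis unfolding lift_def by (rule someI_ex)
  qed
  have lift_path: "pathin E (lift s)" and lift0: "lift s 0 = a s"
      and liftp: "\<And>t. t \<in> {0..1} \<Longrightarrow> p (lift s t) = K (s, t)" if s: "s \<in> {0..1}" for s
    using lift[OF s] by blast+
  have cK: "continuous_map (top_of_set ({0..1} \<times> {0..1})) B K" using K by (simp add: unit_prod)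
  have Kin: "K x \<in> topspace B" if "x \<in> {0..1} \<times> {0..1}" for x
    using continuous_map_image_subset_topspace[OF cK] that by auto
  let ?W = "{V. \<exists>\<U>. evenly E B p V \<U>}"
  obtain \<delta> where d0: "\<delta> > 0" and d: "\<And>T. T \<subseteq> {0..1} \<times> {0..1} \<Longrightarrow> diameter T < \<delta> \<Longrightarrow> \<exists>W\<in>?W. \<forall>x\<in>T. K x \<in> W"
  proof (rule leb[of "{0..1} \<times> {0..1::real}" B K ?W])
    show "\<And>W. W \<in> ?W \<Longrightarrow> openin B W" by (auto intro: evenly_open)
    show "\<exists>W\<in>?W. K x \<in> W" if "x \<in> {0..1} \<times> {0..1}" for x
      using covering_evenly[OF cov Kin[OF that]] by (metis (mono_tags, lifting) mem_Collect_eq)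
  qed (use cK compact_Times[OF compact_Icc compact_Icc] in auto)
  obtain N :: nat where N: "N > 0" "4 / real N < \<delta>"
  proof -
    obtain M :: nat where "M > 0" "1 / real M < \<delta> / 4"
      using d0 by (metis divide_pos_pos nat_approx_posE zero_less_Suc zero_less_numeral)
    then show ?thesis using that[of M] by (simp add: divide_simps mult.commute)
  qed
  define F where "F s = lift s 1" for s
  have Fc: "continuous_map (top_of_set {0..1}) E F"
  proof (rule continuous_map_local)
    fix s0 assume "s0 \<in> topspace (top_of_set {0..1::real})"
    then have s0: "s0 \<in> {0..1}" by simp
    define J where "J = {0..1} \<inter> {s0 - 1/N <..< s0 + 1/N}"
    have J01: "J \<subseteq> {0..1}" and s0J: "s0 \<in> J" unfolding J_def using s0 N by auto
    have oJ: "openin (top_of_set {0..1}) J" unfolding J_def by (auto intro: openin_open_Int)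
    have cJ: "connected_space (top_of_set J)"
      unfolding connected_space_iff_is_interval_1 is_interval_convex_1 J_def
      by (intro convex_Int) auto
    have "continuous_map (top_of_set J) E (\<lambda>s. lift s (real i / N))" if "i \<le> N" for i
      using that
    proof (induction i)
      case 0
      show ?case
        by (rule continuous_map_eq[OF pathin_restrict[OF a(1) J01]]) (use lift J01 in auto)
    next
      case (Suc i)
      let ?a = "real i / N" and ?b = "real (Suc i) / N"
      have ab: "0 \<le> ?a" "?a \<le> ?b" "?b \<le> 1" using Suc.prems N by (auto simp: divide_simps)
      have IH: "continuous_map (top_of_set J) E (\<lambda>s. lift s ?a)" using Suc by auto
      let ?T = "J \<times> {?a..?b}"
      have Tsub: "?T \<subseteq> {0..1} \<times> {0..1}" using J01 ab by (auto intro: order_trans[OF ab(1)] order_trans[OF _ ab(3)])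
      have "diameter ?T \<le> 3 / N"
      proof (rule diameter_le)
        show "?T \<noteq> {} \<or> 0 \<le> 3 / real N" by simp
        fix x y assume xy: "x \<in> ?T" "y \<in> ?T"
        obtain s t s' t' where xy': "x = (s, t)" "y = (s', t')" by fastforce
        have "\<bar>s - s'\<bar> \<le> 2 / N" using xy xy' unfolding J_def by (auto simp: abs_if field_simps)
        moreover have "\<bar>t - t'\<bar> \<le> 1 / N"
        proof -
          have tt: "t \<in> {?a..?b}" "t' \<in> {?a..?b}" using xy xy' by auto
          have ba: "?b = ?a + 1 / N" by (simp add: add_divide_distrib)
          show ?thesis using tt unfolding ba by (simp add: abs_le_iff)
        qed
        ultimately have "norm (s - s', t - t') \<le> 3 / N"
          using norm_Pair_le[of "s - s'" "t - t'"] by (simp add: add_divide_distrib[symmetric])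
        then show "norm (x - y) \<le> 3 / N" using xy' by simp
      qed
      also have "\<dots> < \<delta>"
      proof -
        have "3 / real N \<le> 4 / real N" by (rule divide_right_mono) auto
        then show ?thesis using N by linarith
      qed
      finally obtain V where "V \<in> ?W" and KV: "\<forall>x\<in>?T. K x \<in> V" using d[OF Tsub] by meson
      then obtain \<U> where ev: "evenly E B p V \<U>" by blast
      have la: "lift s ?a \<in> topspace E" "p (lift s ?a) = K (s, ?a)" "p (lift s ?a) \<in> V" if "s \<in> J" for s
        using lift[of s] pathin_in[of E "lift s" ?a] KV that J01 ab by auto
      have "lift s0 ?a \<in> \<Union>\<U>" using la[OF s0J] evenly_Union[OF ev] by auto
      then obtain U0 where U0: "U0 \<in> \<U>" "lift s0 ?a \<in> U0" by blast
      have inU: "lift s ?a \<in> U0" if "s \<in> J" for s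
        using conn_in_sheet[OF ev U0(1) cJ IH, of s0] la s0J U0(2) that by auto
      obtain g where g: "continuous_map (subtopology B V) (subtopology E U0) g"
        "\<And>x. x \<in> U0 \<Longrightarrow> g (p x) = x"
        using evenly_inv[OF ev U0(1)] by metis
      have eq: "lift s ?b = g (K (s, ?b))" if s: "s \<in> J" for s
      proof -
        have s01: "s \<in> {0..1}" using s J01 by auto
        have cI: "connected_space (top_of_set {?a..?b})" by simp
        have cp: "continuous_map (top_of_set {?a..?b}) E (lift s)"
          by (rule pathin_restrict) (use lift[OF s01] ab in \<open>auto intro: order_trans[OF ab(1)] order_trans[OF _ ab(3)]\<close>)
        have hV: "\<And>x. x \<in> topspace (top_of_set {?a..?b}) \<Longrightarrow> p (lift s x) \<in> V"
        proof -
          fix x assume "x \<in> topspace (top_of_set {?a..?b})"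
          then have x: "x \<in> {?a..?b}" by simp
          then have "x \<in> {0..1}" using ab by (auto intro: order_trans[OF ab(1)] order_trans[OF _ ab(3)])
          then show "p (lift s x) \<in> V" using lift[OF s01] KV s x by auto
        qed
        have x0: "?a \<in> topspace (top_of_set {?a..?b})" using ab by simp
        have "lift s ?b \<in> U0"
          using conn_in_sheet[OF ev U0(1) cI cp hV x0 inU[OF s], of ?b] ab by simp
        then have "g (p (lift s ?b)) = lift s ?b" using g(2) by blast
        moreover have "p (lift s ?b) = K (s, ?b)" using lift[OF s01] ab by auto
        ultimately show ?thesis by simp
      qed
      have c1: "continuous_map (top_of_set J) (subtopology B V) (\<lambda>s. K (s, ?b))"
        using KV ab by (intro continuous_map_into_subtopology slice_s[OF K _ J01]) auto
      have "continuous_map (top_of_set J) E (\<lambda>s. g (K (s, ?b)))"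
        using continuous_map_compose[OF c1 g(1)] by (simp add: o_def continuous_map_in_subtopology)
      then show ?case by (rule continuous_map_eq) (use eq in auto)
    qed
    from this[of N] N have "continuous_map (top_of_set J) E F" unfolding F_def by simp
    then show "\<exists>T. openin (top_of_set {0..1}) T \<and> s0 \<in> T \<and> continuous_map (subtopology (top_of_set {0..1}) T) E F"
      using oJ s0J J01 by (intro exI[of _ J]) (simp add: subtopology_subtopology Int_absorb1)
  qed
  have c01: "connected_space (top_of_set {0..1::real})" by simp
  have "pathin E (lift 1)" by (rule lift_path) simp
  then have cl1: "continuous_map (top_of_set {0..1}) E (lift 1)" unfolding pathin_def .
  have ca1: "continuous_map (top_of_set {0..1::real}) E (\<lambda>_. a 1)"
    apply (rule continuous_map_const[THEN iffD2])
    apply (rule disjI2)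
    apply (rule pathin_in[OF a(1)])
    apply simp
    done
  have l1: "lift 1 t = a 1" if "t \<in> {0..1}" for t
  proof -
    have e1: "p (lift 1 x) = p (a 1)" if "x \<in> topspace (top_of_set {0..1::real})" for x
      using liftp[of 1 x] cst[of x] a(2)[of 1] that by simp
    have "lift 1 t = (\<lambda>_. a 1) t"
      by (rule unique_lift[OF cov c01 cl1 ca1, of 0]) (use e1 lift0[of 1] that in simp_all)
    then show ?thesis by simp
  qed
  have ca: "continuous_map (top_of_set {0..1}) E a" using a(1) unfolding pathin_def .
  have Fa: "F s = a s" if "s \<in> {0..1}" for s
  proof -
    have e1: "p (F x) = p (a x)" if "x \<in> topspace (top_of_set {0..1::real})" for x
      using liftp[of x 1] loop[of x] a(2)[of x] that unfolding F_def by simp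
    have F1: "F 1 = a 1" unfolding F_def by (rule l1) simp
    show ?thesis
      apply (rule unique_lift[OF cov c01 Fc ca e1, of 1 s])
      using F1 that by auto
  qed
  have cq: "continuous_map (top_of_set {0..1}) E q" using q(1) unfolding pathin_def .
  have "pathin E (lift 0)" by (rule lift_path) simp
  then have cl0: "continuous_map (top_of_set {0..1}) E (lift 0)" unfolding pathin_def .
  have ql: "q t = lift 0 t" if "t \<in> {0..1}" for t
  proof -
    have e1: "p (q x) = p (lift 0 x)" if "x \<in> topspace (top_of_set {0..1::real})" for x
      using liftp[of 0 x] q(3)[of x] that by simp
    show ?thesis
      apply (rule unique_lift[OF cov c01 cq cl0 e1, of 0 t])
      using lift0[of 0] q(2) that by auto
  qed
  show ?thesis using ql[of 1] ql[of 0] Fa[of 0] lift0[of 0] q(2) unfolding F_def by simp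
qed

definition ecirc :: "real \<Rightarrow> complex" where
  "ecirc t = exp (\<i> * of_real (2 * pi * t))"

lemma ecirc_sphere: "ecirc t \<in> sphere 0 1"
  unfolding ecirc_def by simp

lemma ecirc_int: "ecirc (x + of_int n) = ecirc x"
proof -
  have "ecirc (x + of_int n) = exp (\<i> * of_real (2 * pi * x) + \<i> * (of_int n * (of_real pi * 2)))"
    unfolding ecirc_def by (simp add: algebra_simps)
  also have "\<dots> = ecirc x" unfolding ecirc_def by (rule exp_plus_2pin)
  finally show ?thesis .
qed

lemma ecirc_frac: "ecirc (frac x) = ecirc x"
  using ecirc_int[of "frac x" "\<lfloor>x\<rfloor>"] by (simp add: frac_def)

lemma ecirc_1: "ecirc 1 = ecirc 0"
  using ecirc_int[of 0 1] by simp

lemma Arg2pi_ecirc: "0 \<le> t \<Longrightarrow> t < 1 \<Longrightarrow> Arg2pi (ecirc t) = 2 * pi * t"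
  unfolding ecirc_def by (rule Arg2pi_unique[of 1]) auto

lemma ecirc_Arg: "z \<in> sphere 0 1 \<Longrightarrow> ecirc (Arg2pi z / (2 * pi)) = z"
  unfolding ecirc_def using Arg2pi_eq[of z] by simp

lemma ecirc_onto: "ecirc ` {0..1} = sphere 0 1"
proof
  show "ecirc ` {0..1} \<subseteq> sphere 0 1" using ecirc_sphere by auto
  show "sphere 0 1 \<subseteq> ecirc ` {0..1}"
  proof
    fix z :: complex assume z: "z \<in> sphere 0 1"
    have "Arg2pi z / (2 * pi) \<in> {0..1}" using Arg2pi[of z] by (auto simp: divide_simps)
    then show "z \<in> ecirc ` {0..1}" using ecirc_Arg[OF z] by (metis image_eqI)
  qed
qed

lemma topspace_circle: "topspace circle_top = sphere 0 1"
  unfolding circle_top_def by simp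

lemma ecirc_cont: "continuous_map (top_of_set {0..1}) circle_top ecirc"
  unfolding circle_top_def ecirc_def
  by (intro continuous_map_into_subtopology) (auto intro!: continuous_intros simp: continuous_map_iff_continuous)

lemma ecirc_quot: "quotient_map (top_of_set {0..1}) circle_top ecirc"
  by (rule continuous_imp_quotient_map[OF ecirc_cont])
     (auto simp: compact_space_subtopology circle_top_def ecirc_onto Hausdorff_space_subtopology)

lemma ecirc_quot2: "quotient_map (prod_topology (top_of_set {0..1}) (top_of_set {0..1}))
     (prod_topology (top_of_set {0..1::real}) circle_top) (\<lambda>(s, t). (s, ecirc t))"
proof (rule continuous_imp_quotient_map)
  show "continuous_map (prod_topology (top_of_set {0..1}) (top_of_set {0..1}))
     (prod_topology (top_of_set {0..1::real}) circle_top) (\<lambda>(s, t). (s, ecirc t))"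
    unfolding case_prod_unfold
    by (intro continuous_map_pairedI continuous_map_fst continuous_map_compose[OF continuous_map_snd ecirc_cont, unfolded o_def])
  show "compact_space (prod_topology (top_of_set {0..1::real}) (top_of_set {0..1::real}))"
    unfolding unit_prod by (rule compact_space_subtopology) (simp add: compact_Times[OF compact_Icc compact_Icc])
  show "Hausdorff_space (prod_topology (top_of_set {0..1::real}) circle_top)"
    by (simp add: Hausdorff_space_prod_topology circle_top_def Hausdorff_space_subtopology)
  have "\<And>b. b \<in> sphere 0 1 \<Longrightarrow> \<exists>y\<in>{0..1}. b = ecirc y" using ecirc_onto by blast
  then show "(\<lambda>(s, t). (s, ecirc t)) ` topspace (prod_topology (top_of_set {0..1::real}) (top_of_set {0..1::real})) =
    topspace (prod_topology (top_of_set {0..1::real}) circle_top)"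
    using ecirc_sphere by (auto simp: topspace_circle image_iff)
qed

lemma circ_basic:
  assumes "is_circulation X C" "openin X V"
  shows "C V \<subseteq> V \<times> V" "refl_on V (C V)" "trans (C V)"
  using assms unfolding is_circulation_def by blast+

lemma circ_trans: "is_circulation X C \<Longrightarrow> openin X V \<Longrightarrow> (x, y) \<in> C V \<Longrightarrow> (y, z) \<in> C V \<Longrightarrow> (x, z) \<in> C V"
  using circ_basic(3) unfolding trans_def by metis

lemma circ_refl: "is_circulation X C \<Longrightarrow> openin X V \<Longrightarrow> x \<in> V \<Longrightarrow> (x, x) \<in> C V"
  using circ_basic(2) unfolding refl_on_def by metis

lemma circ_union:
  assumes "is_circulation X C" "\<And>V. V \<in> \<O> \<Longrightarrow> openin X V"
  shows "C (\<Union>\<O>) = Id_on (\<Union>\<O>) \<union> (\<Union>V\<in>\<O>. C V)\<^sup>+"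
  using assms unfolding is_circulation_def smallest_preorder_on_def by blast

lemma circ_mono:
  assumes c: "is_circulation X C" and o: "openin X U" "openin X V" and "U \<subseteq> V"
  shows "C U \<subseteq> C V"
proof -
  have "C (\<Union>{U, V}) = Id_on (\<Union>{U, V}) \<union> (\<Union>W\<in>{U, V}. C W)\<^sup>+"
    by (rule circ_union[OF c]) (use o in auto)
  moreover have "\<Union>{U, V} = V" using \<open>U \<subseteq> V\<close> by auto
  ultimately have "C V = Id_on V \<union> (C U \<union> C V)\<^sup>+" by simp
  then show ?thesis by auto
qed

definition ssheet where
  "ssheet E CE B CB \<rho> U V \<longleftrightarrow> openin E U \<and> openin B V \<and> U \<subseteq> topspace E \<inter> \<rho> -` V \<and>
     stream_iso (subtopology E U) CE (subtopology B V) CB \<rho>"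

lemma ssheet_cover:
  assumes "stream_covering E CE B CB \<rho>" "x \<in> topspace E"
  shows "\<exists>U V. ssheet E CE B CB \<rho> U V \<and> x \<in> U"
proof -
  have "\<rho> x \<in> topspace B" using assms unfolding stream_covering_def stream_map_def
    by (auto dest: continuous_map_image_subset_topspace)
  moreover have "\<forall>b\<in>topspace B. \<exists>V. b \<in> V \<and> openin B V \<and>
        (\<exists>\<U>. \<Union>\<U> = topspace E \<inter> \<rho> -` V \<and> pairwise disjnt \<U> \<and>
           (\<forall>U\<in>\<U>. openin E U \<and> stream_iso (subtopology E U) CE (subtopology B V) CB \<rho>))"
    using assms(1) unfolding stream_covering_def by (elim conjE)
  ultimately obtain V \<U> where V: "\<rho> x \<in> V" "openin B V" "\<Union>\<U> = topspace E \<inter> \<rho> -` V"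
    "\<forall>U\<in>\<U>. openin E U \<and> stream_iso (subtopology E U) CE (subtopology B V) CB \<rho>"
    by (meson)
  then have "x \<in> \<Union>\<U>" using assms(2) by blast
  then obtain U where U: "U \<in> \<U>" "x \<in> U" by blast
  have "U \<subseteq> topspace E \<inter> \<rho> -` V" using V(3) U(1) by blast
  moreover have "openin E U \<and> stream_iso (subtopology E U) CE (subtopology B V) CB \<rho>" using V(4) U(1) by blast
  ultimately have "ssheet E CE B CB \<rho> U V" unfolding ssheet_def using V(2) by blast
  then show ?thesis using U(2) by blast
qed

lemma ssheet_props:
  assumes s: "ssheet E CE B CB \<rho> U V"
  obtains g where "\<And>y. y \<in> V \<Longrightarrow> g y \<in> U" "\<And>x. x \<in> U \<Longrightarrow> g (\<rho> x) = x"
    "\<And>y. y \<in> V \<Longrightarrow> \<rho> (g y) = y"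
    "continuous_map (subtopology B V) E g"
    "\<And>y y'. (y, y') \<in> CB V \<Longrightarrow> (g y, g y') \<in> CE U"
    "\<And>x x'. (x, x') \<in> CE U \<Longrightarrow> (\<rho> x, \<rho> x') \<in> CB V"
proof -
  have oU: "openin E U" and oV: "openin B V" and UV: "U \<subseteq> topspace E \<inter> \<rho> -` V"
    and iso: "stream_iso (subtopology E U) CE (subtopology B V) CB \<rho>" using s unfolding ssheet_def by auto
  have tU: "topspace (subtopology E U) = U" using oU by (metis openin_subset topspace_subtopology_subset)
  have tV: "topspace (subtopology B V) = V" using oV by (metis openin_subset topspace_subtopology_subset)
  obtain g where r: "stream_map (subtopology E U) CE (subtopology B V) CB \<rho>"
    and g: "stream_map (subtopology B V) CB (subtopology E U) CE g"
    and gr: "\<forall>x\<in>U. g (\<rho> x) = x" and rg: "\<forall>y\<in>V. \<rho> (g y) = y"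
    using iso tU tV unfolding stream_iso_def by metis
  have gc: "continuous_map (subtopology B V) (subtopology E U) g" using g unfolding stream_map_def by blast
  have gU: "\<And>y. y \<in> V \<Longrightarrow> g y \<in> U" using continuous_map_image_subset_topspace[OF gc] tU tV by auto
  show ?thesis
  proof (rule that[OF gU _ _ _ _])
    show "\<And>x. x \<in> U \<Longrightarrow> g (\<rho> x) = x" using gr by blast
    show "\<And>y. y \<in> V \<Longrightarrow> \<rho> (g y) = y" using rg by blast
    show "continuous_map (subtopology B V) E g" using gc continuous_map_in_subtopology by blast
    show "(g y, g y') \<in> CE U" if "(y, y') \<in> CB V" for y y'
    proof -
      have "openin (subtopology E U) U" using oU by (simp add: openin_subset openin_subtopology_refl)
      moreover have "topspace (subtopology B V) \<inter> g -` U = V" using tV gU by auto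
      ultimately show ?thesis using g that unfolding stream_map_def by metis
    qed
    show "(\<rho> x, \<rho> x') \<in> CB V" if "(x, x') \<in> CE U" for x x'
    proof -
      have "openin (subtopology B V) V" using oV by (simp add: openin_subset openin_subtopology_refl)
      moreover have "topspace (subtopology E U) \<inter> \<rho> -` V = U" using tU UV by auto
      ultimately show ?thesis using r that unfolding stream_map_def by metis
    qed
  qed
qed

lemma rel_lemma:
  assumes sE: "is_stream E CE" and sc: "stream_covering E CE B CB \<rho>"
    and f: "stream_map circle_top circle_circ B CB f"
    and q: "pathin E q" and qf: "\<And>t. t \<in> {0..1} \<Longrightarrow> \<rho> (q t) = f (ecirc t)"
  shows "\<And>t t'. 0 \<le> t \<Longrightarrow> t \<le> t' \<Longrightarrow> t' \<le> 1 \<Longrightarrow> (q t, q t') \<in> CE (topspace E)"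
proof -
  let ?S = "{U. \<exists>V. ssheet E CE B CB \<rho> U V}"
  have cq: "continuous_map (top_of_set {0..1}) E q" using q unfolding pathin_def .
  have oT: "openin E (topspace E)" by simp
  obtain \<delta> where d0: "\<delta> > 0" and d: "\<And>T. T \<subseteq> {0..1} \<Longrightarrow> diameter T < \<delta> \<Longrightarrow> \<exists>U\<in>?S. \<forall>x\<in>T. q x \<in> U"
  proof (rule leb[of "{0..1::real}" E q ?S])
    show "\<And>W. W \<in> ?S \<Longrightarrow> openin E W" unfolding ssheet_def by blast
    show "\<exists>W\<in>?S. q x \<in> W" if "x \<in> {0..1}" for x
      using ssheet_cover[OF sc pathin_in[OF q that]] by blast
  qed (use cq in auto)
  have small: "(q t, q t') \<in> CE (topspace E)"
    if t: "0 \<le> t" "t \<le> t'" "t' \<le> 1" "t' - t < \<delta>" for t t'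
  proof -
    have "diameter {t..t'} < \<delta>" using t by simp
    then obtain U where "U \<in> ?S" and qU: "\<forall>x\<in>{t..t'}. q x \<in> U" using d[of "{t..t'}"] t by auto
    then obtain V where sh: "ssheet E CE B CB \<rho> U V" by blast
    have oU: "openin E U" and oV: "openin B V" and UV: "U \<subseteq> topspace E \<inter> \<rho> -` V"
      using sh unfolding ssheet_def by auto
    obtain g where g2: "\<And>x. x \<in> U \<Longrightarrow> g (\<rho> x) = x"
      and g5: "\<And>y y'. (y, y') \<in> CB V \<Longrightarrow> (g y, g y') \<in> CE U"
      using ssheet_props[OF sh] by metis
    have hV: "f (ecirc x) \<in> V" if "x \<in> {t..t'}" for x
    proof -
      have "x \<in> {0..1}" using that t by auto
      moreover have "q x \<in> U" using qU that by blast
      ultimately show ?thesis using qf[of x] UV by (metis IntD2 subsetD vimageE)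
    qed
    have "(ecirc t, ecirc t') \<in> circle_circ (topspace circle_top \<inter> f -` V)"
      unfolding circle_circ_def
    proof (intro CollectI case_prodI exI conjI)
      show "2 * pi * t \<le> 2 * pi * t'" using t by simp
      show "ecirc t = exp (\<i> * complex_of_real (2 * pi * t))" unfolding ecirc_def ..
      show "ecirc t' = exp (\<i> * complex_of_real (2 * pi * t'))" unfolding ecirc_def ..
      show "(\<lambda>t. exp (\<i> * complex_of_real t)) ` {2 * pi * t..2 * pi * t'} \<subseteq> topspace circle_top \<inter> f -` V"
      proof
        fix z assume "z \<in> (\<lambda>t. exp (\<i> * complex_of_real t)) ` {2 * pi * t..2 * pi * t'}"
        then obtain y where y: "y \<in> {2 * pi * t..2 * pi * t'}" "z = exp (\<i> * complex_of_real y)" by blast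
        have z: "z = ecirc (y / (2 * pi))" unfolding ecirc_def y(2) by simp
        have "y / (2 * pi) \<in> {t..t'}" using y(1) by (auto simp: field_simps)
        then show "z \<in> topspace circle_top \<inter> f -` V"
          using hV z ecirc_sphere topspace_circle by auto
      qed
    qed
    then have "(f (ecirc t), f (ecirc t')) \<in> CB V" using f oV unfolding stream_map_def by blast
    then have "(\<rho> (q t), \<rho> (q t')) \<in> CB V" using qf t by auto
    then have "(g (\<rho> (q t)), g (\<rho> (q t'))) \<in> CE U" by (rule g5)
    moreover have "q t \<in> U" "q t' \<in> U" using qU t by auto
    ultimately have "(q t, q t') \<in> CE U" using g2 by metis
    then show ?thesis using circ_mono[OF sE oU oT] UV by blast
  qed
  have ind: "\<forall>t t'. 0 \<le> t \<longrightarrow> t \<le> t' \<longrightarrow> t' \<le> 1 \<longrightarrow> t' - t \<le> real n * (\<delta> / 2) \<longrightarrow> (q t, q t') \<in> CE (topspace E)" for n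
  proof (induction n)
    case 0
    show ?case
    proof (intro allI impI)
      fix t t' :: real assume t: "0 \<le> t" "t \<le> t'" "t' \<le> 1" "t' - t \<le> real 0 * (\<delta> / 2)"
      then have "t' = t" by simp
      then show "(q t, q t') \<in> CE (topspace E)" using circ_refl[OF sE oT pathin_in[OF q]] t by simp
    qed
  next
    case (Suc n)
    show ?case
    proof (intro allI impI)
      fix t t' :: real assume t: "0 \<le> t" "t \<le> t'" "t' \<le> 1" "t' - t \<le> real (Suc n) * (\<delta> / 2)"
      define m where "m = max t (t' - \<delta> / 2)"
      have m: "t \<le> m" "m \<le> t'" "m - t \<le> real n * (\<delta> / 2)" "t' - m < \<delta>"
        using t d0 mult_nonneg_nonneg[of "real n" "\<delta> / 2"] unfolding m_def
        by (auto simp: algebra_simps max_def)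
      have "(q t, q m) \<in> CE (topspace E)" using Suc.IH m t by auto
      moreover have "(q m, q t') \<in> CE (topspace E)" using small[of m t'] m t by auto
      ultimately show "(q t, q t') \<in> CE (topspace E)" using circ_trans[OF sE oT] by blast
    qed
  qed
  obtain n :: nat where n: "2 / \<delta> < real n" using reals_Archimedean2 by blast
  have "1 \<le> real n * (\<delta> / 2)" using n d0 by (simp add: field_simps)
  then show "\<And>t t'. 0 \<le> t \<Longrightarrow> t \<le> t' \<Longrightarrow> t' \<le> 1 \<Longrightarrow> (q t, q t') \<in> CE (topspace E)"
    using ind[of n] by auto
qed

lemma dirA:
  assumes sE: "is_stream E CE" and usc: "universal_stream_covering E CE B CB \<rho>"
    and anti: "antisym (CE (topspace E))"
    and f: "stream_map circle_top circle_circ B CB f" and nh: "null_homotopic circle_top B f"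
  shows "\<exists>c. \<forall>z\<in>topspace circle_top. f z = c"
proof -
  have cov: "covering_map E B \<rho>" and sc: "stream_covering E CE B CB \<rho>"
    using usc unfolding universal_stream_covering_def universal_covering_map_def by auto
  obtain c H where H: "continuous_map (prod_topology (top_of_set {0..1::real}) circle_top) B H"
    and H0: "\<And>x. H (0, x) = f x" and H1: "\<And>x. H (1, x) = c"
    using nh unfolding null_homotopic_def homotopic_with_def by metis
  define K where "K st = H (fst st, ecirc (snd st))" for st
  have "continuous_map (prod_topology (top_of_set {0..1}) (top_of_set {0..1})) B (H \<circ> (\<lambda>(s, t). (s, ecirc t)))"
    by (rule continuous_map_compose[OF quotient_imp_continuous_map[OF ecirc_quot2] H])
  moreover have "H \<circ> (\<lambda>(s, t). (s, ecirc t)) = K" unfolding K_def by (auto simp: fun_eq_iff)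
  ultimately have Kc: "continuous_map (prod_topology (top_of_set {0..1}) (top_of_set {0..1})) B K" by simp
  have pa: "pathin B (\<lambda>s. K (s, 0))" unfolding pathin_def by (rule slice_s[OF Kc]) auto
  have K00: "K (0, 0) \<in> topspace B" using pathin_in[OF pa, of 0] by simp
  obtain e0 where e0: "e0 \<in> topspace E" "\<rho> e0 = K (0, 0)"
    using cov K00 unfolding covering_map_def by (metis imageE)
  obtain a where a: "pathin E a" "a 0 = e0" "\<forall>s\<in>{0..1}. \<rho> (a s) = K (s, 0)"
    using path_lift[OF cov pa e0(1)] e0(2) by auto
  obtain q where q: "pathin E q" "q 0 = a 0" "\<forall>t\<in>{0..1}. \<rho> (q t) = K (0, t)"
    using path_lift[OF cov slice_t[OF Kc, of 0], of "a 0"] pathin_in[OF a(1), of 0] a(2) e0(2) by auto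
  have q10: "q 1 = q 0"
  proof (rule homotopy_lift_closed[OF cov Kc a(1) _ _ _ q(1,2)])
    show "\<And>s. s \<in> {0..1} \<Longrightarrow> \<rho> (a s) = K (s, 0)" using a(3) by blast
    show "\<And>s. s \<in> {0..1} \<Longrightarrow> K (s, 1) = K (s, 0)" unfolding K_def using ecirc_1 by simp
    show "\<And>t. t \<in> {0..1} \<Longrightarrow> K (1, t) = K (1, 0)" unfolding K_def using H1 by simp
    show "\<And>t. t \<in> {0..1} \<Longrightarrow> \<rho> (q t) = K (0, t)" using q(3) by blast
  qed
  have qf: "\<rho> (q t) = f (ecirc t)" if "t \<in> {0..1}" for t
    using q(3) that H0 unfolding K_def by simp
  have rel: "\<And>t t'. 0 \<le> t \<Longrightarrow> t \<le> t' \<Longrightarrow> t' \<le> 1 \<Longrightarrow> (q t, q t') \<in> CE (topspace E)"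
    by (rule rel_lemma[OF sE sc f q(1) qf])
  have qc: "q t = q 0" if "t \<in> {0..1}" for t
  proof -
    have "(q 0, q t) \<in> CE (topspace E)" using rel[of 0 t] that by auto
    moreover have "(q t, q 0) \<in> CE (topspace E)" using rel[of t 1] that q10 by auto
    ultimately show ?thesis using anti unfolding antisym_def by blast
  qed
  show ?thesis
  proof (intro exI ballI)
    fix z assume "z \<in> topspace circle_top"
    then have "z \<in> ecirc ` {0..1}" using ecirc_onto topspace_circle by simp
    then obtain t where t: "t \<in> {0..1}" "z = ecirc t" by blast
    then show "f z = \<rho> (q 0)" using qf[OF t(1)] qc[OF t(1)] by simp
  qed
qed

definition dprop :: "'b topology \<Rightarrow> ('b set \<Rightarrow> ('b \<times> 'b) set) \<Rightarrow> ('e \<Rightarrow> 'b) \<Rightarrow> (real \<Rightarrow> 'e) \<Rightarrow> bool" where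
  "dprop B CB \<rho> L \<longleftrightarrow> (\<forall>W t t'. openin B W \<longrightarrow> 0 \<le> t \<longrightarrow> t \<le> t' \<longrightarrow> t' \<le> 1 \<longrightarrow>
      (\<forall>x\<in>{t..t'}. \<rho> (L x) \<in> W) \<longrightarrow> (\<rho> (L t), \<rho> (L t')) \<in> CB W)"

definition joinp :: "(real \<Rightarrow> 'e) \<Rightarrow> (real \<Rightarrow> 'e) \<Rightarrow> real \<Rightarrow> 'e" where
  "joinp p q t = (if t \<le> 1/2 then p (2 * t) else q (2 * t - 1))"

lemma joinp_hi:
  assumes "q 0 = p 1" "1/2 \<le> t" shows "joinp p q t = q (2 * t - 1)"
proof (cases "t = 1/2")
  case True
  show ?thesis using assms(1) unfolding joinp_def True by simp
next
  case False
  then show ?thesis using assms unfolding joinp_def by auto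
qed

lemma joinp_lo: "t \<le> 1/2 \<Longrightarrow> joinp p q t = p (2 * t)"
  unfolding joinp_def by auto

lemma pathin_join:
  assumes p: "pathin E p" and q: "pathin E q" and pq: "q 0 = p 1"
  shows "pathin E (joinp p q)"
  unfolding pathin_def joinp_def
proof (rule continuous_map_cases_le)
  show "continuous_map (top_of_set {0..1}) euclideanreal (\<lambda>x. x)" by simp
  show "continuous_map (top_of_set {0..1}) euclideanreal (\<lambda>x. 1/2)" by simp
  have s1: "{0..1} \<inter> {x \<in> topspace (top_of_set {0..1::real}). x \<le> 1/2} = {0..1/2}" by auto
  have "continuous_map (top_of_set {0..1/2::real}) (top_of_set {0..1::real}) (\<lambda>t. 2 * t)"
    by (auto intro!: continuous_map_into_subtopology continuous_intros simp: continuous_map_iff_continuous)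
  from continuous_map_compose[OF this p[unfolded pathin_def]]
  show "continuous_map (subtopology (top_of_set {0..1}) {x \<in> topspace (top_of_set {0..1}). x \<le> 1 / 2}) E (\<lambda>x. p (2 * x))"
    by (simp only: subtopology_subtopology s1 o_def)
  have s2: "{0..1} \<inter> {x \<in> topspace (top_of_set {0..1::real}). 1/2 \<le> x} = {1/2..1}" by auto
  have "continuous_map (top_of_set {1/2..1::real}) (top_of_set {0..1::real}) (\<lambda>t. 2 * t - 1)"
    by (auto intro!: continuous_map_into_subtopology continuous_intros simp: continuous_map_iff_continuous)
  from continuous_map_compose[OF this q[unfolded pathin_def]]
  show "continuous_map (subtopology (top_of_set {0..1}) {x \<in> topspace (top_of_set {0..1}). 1 / 2 \<le> x}) E (\<lambda>x. q (2 * x - 1))"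
    by (simp only: subtopology_subtopology s2 o_def)
  show "p (2 * x) = q (2 * x - 1)" if "x \<in> topspace (top_of_set {0..1})" "x = 1 / 2" for x
    using pq unfolding that(2) by simp
qed

lemma dprop_join:
  assumes sB: "is_stream B CB" and p: "dprop B CB \<rho> p" and q: "dprop B CB \<rho> q" and pq: "q 0 = p 1"
  shows "dprop B CB \<rho> (joinp p q)"
  unfolding dprop_def
proof (intro allI impI)
  fix W t t' assume W: "openin B W" and t: "0 \<le> t" "t \<le> t'" "t' \<le> 1"
    and hW: "\<forall>x\<in>{t..t'}. \<rho> (joinp p q x) \<in> W"
  have lo: "(\<rho> (joinp p q a), \<rho> (joinp p q b)) \<in> CB W" if ab: "t \<le> a" "a \<le> b" "b \<le> 1/2" "b \<le> t'" for a b
  proof -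
    have "(\<rho> (p (2 * a)), \<rho> (p (2 * b))) \<in> CB W"
    proof (rule p[unfolded dprop_def, rule_format, OF W])
      show "0 \<le> 2 * a" "2 * a \<le> 2 * b" "2 * b \<le> 1" using ab t by auto
      show "\<And>x. x \<in> {2 * a..2 * b} \<Longrightarrow> \<rho> (p x) \<in> W"
      proof -
        fix x assume x: "x \<in> {2 * a..2 * b}"
        then have xs: "x / 2 \<in> {t..t'}" "x / 2 \<le> 1/2" using ab by auto
        have "\<rho> (joinp p q (x/2)) \<in> W" using hW xs(1) by blast
        then show "\<rho> (p x) \<in> W" using joinp_lo[OF xs(2), of p q] by simp
      qed
    qed
    then show ?thesis using ab joinp_lo by (metis order_trans)
  qed
  have hi: "(\<rho> (joinp p q a), \<rho> (joinp p q b)) \<in> CB W" if ab: "t \<le> a" "a \<le> b" "1/2 \<le> a" "b \<le> t'" for a b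
  proof -
    have "(\<rho> (q (2 * a - 1)), \<rho> (q (2 * b - 1))) \<in> CB W"
    proof (rule q[unfolded dprop_def, rule_format, OF W])
      show "0 \<le> 2 * a - 1" "2 * a - 1 \<le> 2 * b - 1" "2 * b - 1 \<le> 1" using ab t by auto
      show "\<And>x. x \<in> {2 * a - 1..2 * b - 1} \<Longrightarrow> \<rho> (q x) \<in> W"
      proof -
        fix x assume x: "x \<in> {2 * a - 1..2 * b - 1}"
        then have xs: "(x + 1) / 2 \<in> {t..t'}" "1/2 \<le> (x + 1) / 2" using ab by auto
        have "\<rho> (joinp p q ((x + 1) / 2)) \<in> W" using hW xs(1) by blast
        then show "\<rho> (q x) \<in> W" using joinp_hi[of q p, OF pq xs(2)] by (simp add: field_simps)
      qed
    qed
    then show ?thesis using ab joinp_hi[of q p, OF pq] by (metis order_trans)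
  qed
  show "(\<rho> (joinp p q t), \<rho> (joinp p q t')) \<in> CB W"
  proof (cases "t' \<le> 1/2")
    case True then show ?thesis using lo[of t t'] t by auto
  next
    case False
    show ?thesis
    proof (cases "1/2 \<le> t")
      case True then show ?thesis using hi[of t t'] t by auto
    next
      case False
      then have "(\<rho> (joinp p q t), \<rho> (joinp p q (1/2))) \<in> CB W" using lo[of t "1/2"] \<open>\<not> t' \<le> 1/2\<close> by auto
      moreover have "(\<rho> (joinp p q (1/2)), \<rho> (joinp p q t')) \<in> CB W" using hi[of "1/2" t'] False \<open>\<not> t' \<le> 1/2\<close> by auto
      ultimately show ?thesis using circ_trans[OF sB W] by blast
    qed
  qed
qed

lemma chain_lemma:
  assumes sE: "is_stream E CE" and sc: "stream_covering E CE B CB \<rho>" and po: "path_ordered B CB"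
    and sB: "is_stream B CB"
    and uv: "(u, v) \<in> (\<Union>U\<in>{U. \<exists>V. ssheet E CE B CB \<rho> U V}. CE U)\<^sup>+"
  shows "\<exists>L. pathin E L \<and> L 0 = u \<and> L 1 = v \<and> dprop B CB \<rho> L"
proof -
  have base1: "\<exists>L. pathin E L \<and> L 0 = x \<and> L 1 = y \<and> dprop B CB \<rho> L"
    if xy0: "(x, y) \<in> (\<Union>U\<in>{U. \<exists>V. ssheet E CE B CB \<rho> U V}. CE U)" for x y
  proof -
    obtain U V where sh: "ssheet E CE B CB \<rho> U V" and xy: "(x, y) \<in> CE U" using xy0 by blast
    have oU: "openin E U" using sh unfolding ssheet_def by blast
    obtain g where g1: "\<And>y. y \<in> V \<Longrightarrow> g y \<in> U" and g2: "\<And>x. x \<in> U \<Longrightarrow> g (\<rho> x) = x"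
      and g3: "\<And>y. y \<in> V \<Longrightarrow> \<rho> (g y) = y" and g4: "continuous_map (subtopology B V) E g"
      and g6: "\<And>x x'. (x, x') \<in> CE U \<Longrightarrow> (\<rho> x, \<rho> x') \<in> CB V"
      using ssheet_props[OF sh] by metis
    have xyU: "x \<in> U" "y \<in> U" using circ_basic(1)[OF sE oU] xy by auto
    have "(\<rho> x, \<rho> y) \<in> CB V" using g6[OF xy] .
    moreover have "openin B V" using sh unfolding ssheet_def by blast
    ultimately obtain \<gamma> where \<gamma>: "dipath B CB \<gamma>" "\<gamma> 0 = \<rho> x" "\<gamma> 1 = \<rho> y" "\<gamma> ` {0..1} \<subseteq> V"
      using po unfolding path_ordered_def by blast
    have \<gamma>c: "continuous_map (top_of_set {0..1}) B \<gamma>" using \<gamma>(1) unfolding dipath_def stream_map_def dint_top_def by blast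
    have "continuous_map (top_of_set {0..1}) (subtopology B V) \<gamma>"
      using \<gamma>c \<gamma>(4) by (simp add: continuous_map_in_subtopology image_subset_iff_funcset)
    then have Lc: "continuous_map (top_of_set {0..1}) E (g \<circ> \<gamma>)" using continuous_map_compose g4 by blast
    have rL: "\<rho> ((g \<circ> \<gamma>) s) = \<gamma> s" if "s \<in> {0..1}" for s using g3 \<gamma>(4) that by (simp add: image_subset_iff)
    have "dprop B CB \<rho> (g \<circ> \<gamma>)"
      unfolding dprop_def
    proof (intro allI impI)
      fix W t t' assume W: "openin B W" and t: "0 \<le> t" "t \<le> t'" "t' \<le> 1"
        and hW: "\<forall>x\<in>{t..t'}. \<rho> ((g \<circ> \<gamma>) x) \<in> W"
      have "(t, t') \<in> dint_circ (topspace dint_top \<inter> \<gamma> -` W)"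
        unfolding dint_circ_def dint_top_def using t hW rL by auto
      then have "(\<gamma> t, \<gamma> t') \<in> CB W" using \<gamma>(1) W unfolding dipath_def stream_map_def by blast
      then show "(\<rho> ((g \<circ> \<gamma>) t), \<rho> ((g \<circ> \<gamma>) t')) \<in> CB W" using rL t by auto
    qed
    moreover have "(g \<circ> \<gamma>) 0 = x" "(g \<circ> \<gamma>) 1 = y" using \<gamma> g2 xyU by auto
    ultimately show ?thesis using Lc unfolding pathin_def by blast
  qed
  from uv show ?thesis
  proof (induction rule: trancl_induct)
    case (base y)
    then show ?case using base1 by blast
  next
    case (step y z)
    obtain L1 where L1: "pathin E L1" "L1 0 = u" "L1 1 = y" "dprop B CB \<rho> L1" using step.IH by blast
    obtain L2 where L2: "pathin E L2" "L2 0 = y" "L2 1 = z" "dprop B CB \<rho> L2" using base1[OF step.hyps(2)] by blast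
    have "L2 0 = L1 1" using L1 L2 by simp
    moreover have "joinp L1 L2 0 = u" "joinp L1 L2 1 = z" using L1 L2 unfolding joinp_def by auto
    ultimately show ?case
      using pathin_join[OF L1(1) L2(1)] dprop_join[OF sB L1(4) L2(4)] by blast
  qed
qed

lemma perio:
  assumes sB: "is_stream B CB" and W: "openin B W" and dp: "dprop B CB \<rho> L"
    and L10: "\<rho> (L 1) = \<rho> (L 0)"
  shows "\<forall>u u'. u \<le> u' \<longrightarrow> nat (\<lfloor>u'\<rfloor> - \<lfloor>u\<rfloor>) = n \<longrightarrow> (\<forall>x\<in>{u..u'}. \<rho> (L (frac x)) \<in> W)
     \<longrightarrow> (\<rho> (L (frac u)), \<rho> (L (frac u'))) \<in> CB W"
proof (induction n)
  case 0
  show ?case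
  proof (intro allI impI)
    fix u u' :: real assume u: "u \<le> u'" "nat (\<lfloor>u'\<rfloor> - \<lfloor>u\<rfloor>) = 0" and hW: "\<forall>x\<in>{u..u'}. \<rho> (L (frac x)) \<in> W"
    have "\<lfloor>u\<rfloor> \<le> \<lfloor>u'\<rfloor>" using u(1) floor_mono by blast
    then have k: "\<lfloor>u'\<rfloor> = \<lfloor>u\<rfloor>" using u(2) by linarith
    show "(\<rho> (L (frac u)), \<rho> (L (frac u'))) \<in> CB W"
    proof (rule dp[unfolded dprop_def, rule_format, OF W])
      show "0 \<le> frac u" by simp
      show "frac u \<le> frac u'" using u(1) k unfolding frac_def by simp
      show "frac u' \<le> 1" using frac_lt_1[of u'] by simp
      show "\<rho> (L y) \<in> W" if y: "y \<in> {frac u..frac u'}" for y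
      proof -
        have y01: "0 \<le> y" "y < 1" using y frac_lt_1[of u'] order_trans[OF frac_ge_0[of u]] by auto
        have "y + of_int \<lfloor>u\<rfloor> \<in> {u..u'}" using y k unfolding frac_def by auto
        moreover have "frac (y + of_int \<lfloor>u\<rfloor>) = y" using y01 by (simp add: frac_unique_iff)
        ultimately show ?thesis using hW by metis
      qed
    qed
  qed
next
  case (Suc n)
  show ?case
  proof (intro allI impI)
    fix u u' :: real assume u: "u \<le> u'" "nat (\<lfloor>u'\<rfloor> - \<lfloor>u\<rfloor>) = Suc n" and hW: "\<forall>x\<in>{u..u'}. \<rho> (L (frac x)) \<in> W"
    define m where "m = real_of_int (\<lfloor>u\<rfloor> + 1)"
    have fm: "\<lfloor>m\<rfloor> = \<lfloor>u\<rfloor> + 1" "frac m = 0" unfolding m_def by simp_all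
    have "\<lfloor>u\<rfloor> + 1 \<le> \<lfloor>u'\<rfloor>" using u(2) by linarith
    then have "real_of_int (\<lfloor>u\<rfloor> + 1) \<le> real_of_int \<lfloor>u'\<rfloor>" by linarith
    then have mu: "u \<le> m" "m \<le> u'" unfolding m_def
      using real_of_int_floor_add_one_ge[of u] of_int_floor_le[of u'] by linarith+
    have "nat (\<lfloor>u'\<rfloor> - \<lfloor>m\<rfloor>) = n" using u(2) fm by linarith
    then have r2: "(\<rho> (L (frac m)), \<rho> (L (frac u'))) \<in> CB W"
      using Suc.IH mu hW by auto
    have r1: "(\<rho> (L (frac u)), \<rho> (L 1)) \<in> CB W"
    proof (rule dp[unfolded dprop_def, rule_format, OF W])
      show "0 \<le> frac u" "frac u \<le> 1" using frac_lt_1[of u] by auto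
      show "(1::real) \<le> 1" by simp
      show "\<rho> (L y) \<in> W" if y: "y \<in> {frac u..1}" for y
      proof (cases "y = 1")
        case True
        have "\<rho> (L (frac m)) \<in> W" using hW mu by auto
        then show ?thesis using True L10 fm by simp
      next
        case False
        then have y01: "0 \<le> y" "y < 1" using y order_trans[OF frac_ge_0[of u]] by auto
        have "y + of_int \<lfloor>u\<rfloor> \<in> {u..u'}" using y y01 mu unfolding frac_def m_def by auto
        moreover have "frac (y + of_int \<lfloor>u\<rfloor>) = y" using y01 by (simp add: frac_unique_iff)
        ultimately show ?thesis using hW by metis
      qed
    qed
    have "\<rho> (L 1) = \<rho> (L (frac m))" by (simp only: fm(2) L10)
    then show "(\<rho> (L (frac u)), \<rho> (L (frac u'))) \<in> CB W"
      using r1 r2 circ_trans[OF sB W] by metis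
  qed
qed

lemma dirB:
  assumes sE: "is_stream E CE" and sB: "is_stream B CB"
    and usc: "universal_stream_covering E CE B CB \<rho>" and po: "path_ordered B CB"
    and H2: "\<forall>f. stream_map circle_top circle_circ B CB f \<and> null_homotopic circle_top B f
       \<longrightarrow> (\<exists>c. \<forall>z\<in>topspace circle_top. f z = c)"
  shows "antisym (CE (topspace E))"
  unfolding antisym_def
proof (intro allI impI)
  fix e e' assume ee: "(e, e') \<in> CE (topspace E)" "(e', e) \<in> CE (topspace E)"
  show "e = e'"
  proof (rule ccontr)
    assume ne: "e \<noteq> e'"
    have cov: "covering_map E B \<rho>" and sc: "stream_covering E CE B CB \<rho>"
      and scon: "simply_connected_space E"
      using usc unfolding universal_stream_covering_def universal_covering_map_def by auto
    have \<rho>c: "continuous_map E B \<rho>" using cov unfolding covering_map_def by blast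
    let ?S = "{U. \<exists>V. ssheet E CE B CB \<rho> U V}"
    have US: "\<Union>?S = topspace E"
    proof
      show "\<Union>?S \<subseteq> topspace E" unfolding ssheet_def by blast
      show "topspace E \<subseteq> \<Union>?S" using ssheet_cover[OF sc] by blast
    qed
    have "CE (\<Union>?S) = Id_on (\<Union>?S) \<union> (\<Union>U\<in>?S. CE U)\<^sup>+"
      by (rule circ_union[OF sE]) (auto simp: ssheet_def)
    then have un: "CE (topspace E) = Id_on (topspace E) \<union> (\<Union>U\<in>?S. CE U)\<^sup>+" using US by simp
    have t1: "(e, e') \<in> (\<Union>U\<in>?S. CE U)\<^sup>+" and t2: "(e', e) \<in> (\<Union>U\<in>?S. CE U)\<^sup>+"
      using ee ne un by auto
    obtain P where P: "pathin E P" "P 0 = e" "P 1 = e'" "dprop B CB \<rho> P"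
      using chain_lemma[OF sE sc po sB t1] by blast
    obtain Q where Q: "pathin E Q" "Q 0 = e'" "Q 1 = e" "dprop B CB \<rho> Q"
      using chain_lemma[OF sE sc po sB t2] by blast
    have PQ: "Q 0 = P 1" using P Q by simp
    define L where "L = joinp P Q"
    have Lp: "pathin E L" unfolding L_def by (rule pathin_join[OF P(1) Q(1) PQ])
    have Ld: "dprop B CB \<rho> L" unfolding L_def by (rule dprop_join[OF sB P(4) Q(4) PQ])
    have L0: "L 0 = e" and L1: "L 1 = e" and Lh: "L (1/2) = e'"
      unfolding L_def joinp_def using P Q by auto
    have Lc: "continuous_map (top_of_set {0..1}) E L" using Lp unfolding pathin_def .
    define f where "f z = \<rho> (L (Arg2pi z / (2 * pi)))" for z
    have fe: "f (ecirc t) = \<rho> (L t)" if t: "t \<in> {0..1}" for t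
    proof (cases "t = 1")
      case True
      have "f (ecirc t) = f (ecirc 0)" using True ecirc_1 by simp
      also have "\<dots> = \<rho> (L 0)" unfolding f_def using Arg2pi_ecirc[of 0] by simp
      finally show ?thesis using True L0 L1 by simp
    next
      case False
      then have "0 \<le> t" "t < 1" using t by auto
      then show ?thesis unfolding f_def using Arg2pi_ecirc[of t] by simp
    qed
    have ff: "f (ecirc x) = \<rho> (L (frac x))" for x
    proof -
      have "frac x \<in> {0..1}" using frac_lt_1[of x] by auto
      then show ?thesis using fe[of "frac x"] ecirc_frac[of x] by simp
    qed
    have fc: "continuous_map circle_top B f"
    proof (rule continuous_compose_quotient_map[OF ecirc_quot])
      show "continuous_map (top_of_set {0..1}) B (f \<circ> ecirc)"
        by (rule continuous_map_eq[OF continuous_map_compose[OF Lc \<rho>c]]) (use fe in auto)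
    qed
    have L10: "\<rho> (L 1) = \<rho> (L 0)" using L0 L1 by simp
    have fs: "stream_map circle_top circle_circ B CB f"
      unfolding stream_map_def
    proof (intro conjI fc allI impI)
      fix V z z' assume V: "openin B V" and zz: "(z, z') \<in> circle_circ (topspace circle_top \<inter> f -` V)"
      then obtain \<theta> \<theta>' where th: "\<theta> \<le> \<theta>'" "z = exp (\<i> * of_real \<theta>)" "z' = exp (\<i> * of_real \<theta>')"
        and img: "(\<lambda>t. exp (\<i> * of_real t)) ` {\<theta>..\<theta>'} \<subseteq> topspace circle_top \<inter> f -` V"
        unfolding circle_circ_def by blast
      define u where "u = \<theta> / (2 * pi)"
      define u' where "u' = \<theta>' / (2 * pi)"
      have uu: "u \<le> u'" using th(1) unfolding u_def u'_def by (simp add: divide_right_mono)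
      have zu: "z = ecirc u" "z' = ecirc u'" unfolding ecirc_def u_def u'_def th by simp_all
      have hW: "\<forall>x\<in>{u..u'}. \<rho> (L (frac x)) \<in> V"
      proof
        fix x assume x: "x \<in> {u..u'}"
        have "2 * pi * x \<in> {\<theta>..\<theta>'}" using x unfolding u_def u'_def by (auto simp: field_simps)
        then have "exp (\<i> * of_real (2 * pi * x)) \<in> topspace circle_top \<inter> f -` V" using img by blast
        then have "f (ecirc x) \<in> V" unfolding ecirc_def by simp
        then show "\<rho> (L (frac x)) \<in> V" using ff by simp
      qed
      have "(\<rho> (L (frac u)), \<rho> (L (frac u'))) \<in> CB V"
        using perio[OF sB V Ld L10, of "nat (\<lfloor>u'\<rfloor> - \<lfloor>u\<rfloor>)"] uu hW by blast
      then show "(f z, f z') \<in> CB V" using zu ff by simp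
    qed
    have fn: "null_homotopic circle_top B f"
    proof -
      have "homotopic_with (\<lambda>r. r 1 = r 0) (top_of_set {0..1}) E L (\<lambda>t. L 0)"
        using scon Lp L0 L1 unfolding simply_connected_space_def by auto
      then obtain h where hc: "continuous_map (prod_topology (top_of_set {0..1::real}) (top_of_set {0..1})) E h"
        and h0: "\<And>x. h (0, x) = L x" and h1: "\<And>x. h (1, x) = L 0"
        and hl: "\<And>s. s \<in> {0..1} \<Longrightarrow> h (s, 1) = h (s, 0)"
        unfolding homotopic_with_def by auto
      define Hc where "Hc sz = \<rho> (h (fst sz, Arg2pi (snd sz) / (2 * pi)))" for sz
      have Hcc: "continuous_map (prod_topology (top_of_set {0..1::real}) circle_top) B Hc"
      proof (rule continuous_compose_quotient_map[OF ecirc_quot2])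
        show "continuous_map (prod_topology (top_of_set {0..1}) (top_of_set {0..1})) B (Hc \<circ> (\<lambda>(s, t). (s, ecirc t)))"
        proof (rule continuous_map_eq[OF continuous_map_compose[OF hc \<rho>c]])
          fix st assume "st \<in> topspace (prod_topology (top_of_set {0..1::real}) (top_of_set {0..1::real}))"
          then obtain s t where st: "st = (s, t)" "s \<in> {0..1}" "t \<in> {0..1}" by auto
          have "h (s, Arg2pi (ecirc t) / (2 * pi)) = h (s, t)"
          proof (cases "t = 1")
            case True
            then show ?thesis using ecirc_1 Arg2pi_ecirc[of 0] hl[OF st(2)] by simp
          next
            case False
            then show ?thesis using Arg2pi_ecirc[of t] st(3) by simp
          qed
          then show "(\<rho> \<circ> h) st = (Hc \<circ> (\<lambda>(s, t). (s, ecirc t))) st"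
            unfolding Hc_def st by simp
        qed
      qed
      have "homotopic_with (\<lambda>_. True) circle_top B f (\<lambda>_. \<rho> (L 0))"
        unfolding homotopic_with_def
        by (rule exI[of _ Hc]) (use Hcc h0 h1 in \<open>auto simp: Hc_def f_def\<close>)
      then show ?thesis unfolding null_homotopic_def by blast
    qed
    obtain c where c: "\<forall>z\<in>topspace circle_top. f z = c" using H2 fs fn by blast
    have Lcst: "\<rho> (L t) = \<rho> e" if "t \<in> {0..1}" for t
    proof -
      have "\<rho> (L t) = c" using c fe[OF that] ecirc_sphere topspace_circle by metis
      moreover have "\<rho> (L 0) = c" using c fe[of 0] ecirc_sphere topspace_circle by auto
      ultimately show ?thesis using L0 by simp
    qed
    have c01: "connected_space (top_of_set {0..1::real})" by simp
    have ce: "continuous_map (top_of_set {0..1::real}) E (\<lambda>_. e)"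
      using pathin_in[OF Lp, of 0] L0 by simp
    have "L (1/2) = (\<lambda>_. e) (1/2)"
      by (rule unique_lift[OF cov c01 Lc ce, of 0]) (use Lcst L0 in auto)
    then show False using Lh ne by simp
  qed
qed

theorem mainTheorem3:
  fixes E :: "'e topology" and CE :: "'e set \<Rightarrow> ('e \<times> 'e) set"
    and B :: "'b topology" and CB :: "'b set \<Rightarrow> ('b \<times> 'b) set"
    and \<rho> :: "'e \<Rightarrow> 'b"
  assumes "is_stream E CE" and "is_stream B CB"
    and "universal_stream_covering E CE B CB \<rho>"
    and "path_ordered B CB"
  shows "antisym (CE (topspace E)) \<longleftrightarrow>
    (\<forall>f. stream_map circle_top circle_circ B CB f \<and> null_homotopic circle_top B f
       \<longrightarrow> (\<exists>c. \<forall>z\<in>topspace circle_top. f z = c))"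
proof
  assume anti: "antisym (CE (topspace E))"
  show "\<forall>f. stream_map circle_top circle_circ B CB f \<and> null_homotopic circle_top B f
       \<longrightarrow> (\<exists>c. \<forall>z\<in>topspace circle_top. f z = c)"
    using dirA[OF assms(1) assms(3) anti] by blast
next
  assume "\<forall>f. stream_map circle_top circle_circ B CB f \<and> null_homotopic circle_top B f
       \<longrightarrow> (\<exists>c. \<forall>z\<in>topspace circle_top. f z = c)"
  then show "antisym (CE (topspace E))"
    by (rule dirB[OF assms(1) assms(2) assms(3) assms(4)])
qed

end
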